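(* Assume $\mu<0$ and conditions (C1) and (C2). Let $\pi^*_1,\pi^*_2$ be the two marginals of $\pi^*$ on $E$ and $\mu^*=\pi^*(f)$. Then $$\pi^*_1\otimes\pi_Q(f)<\mu^*\quad\text{and}\quad\pi_P\otimes\pi^*_2(f)<\mu^*.$$
   Context: Let $E$ be a finite set and $P,Q$ irreducible aperiodic stochastic $E\times E$ matrices with invariant probability vectors $\pi_P,\pi_Q$; $\pi=\pi_P\otimes\pi_Q$. Let $f:E\times E\to\mathbb Z$ with gcd of its values equal to $1$; $\nu(f)=\sum f\,d\nu$; $\mu=\pi(f)$. A cycle w.r.t. $P$ is a sequence $x_1,\dots,x_n$ with $P(x_k,x_{k+1})>0$ for all $k$, indices mod $n$. (C1): for some $n\ge1$ there are cycles $x_1,\dots,x_n$ w.r.t. $P$ and $y_1,\dots,y_n$ w.r.t. $Q$ with $\sum_kf(x_k,y_k)>0$. (C2): for every $T\ge1$ there are $n\ge1$ and cycles $x_1,\dots,x_n$ w.r.t. $P$ and $y_1,\dots,y_n$ w.r.t. $Q$ with $\sum_kf(x_k,y_k)\ne\sum_kf(x_k,y_{k+T\bmod n})$. Let $\Phi(\theta)_{(x,y),(x',y')}=e^{\theta f(x',y')}P_{x,x'}Q_{y,y'}$, $\varphi(\theta)$ its spectral radius, $\theta^*>0$ the unique positive solution of $\varphi(\theta)=1$, $r^*$ a positive right eigenvector of $\Phi(\theta^* )$ for eigenvalue 1, $R^*_{(x,y),(x',y')}=\frac{r^*(x',y')}{r^*(x,y)}\Phi(\theta^* )_{(x,y),(x',y')}$,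 and $\pi^*$ the invariant probability vector of $R^*$. *)

theory Defs
  imports "HOL-Analysis.Analysis"
begin

fun mpow :: "('b::finite \<Rightarrow> 'b \<Rightarrow> real) \<Rightarrow> nat \<Rightarrow> 'b \<Rightarrow> 'b \<Rightarrow> real" where
  "mpow M 0 = (\<lambda>i j. if i = j then 1 else 0)"
| "mpow M (Suc n) = (\<lambda>i j. \<Sum>k\<in>UNIV. mpow M n i k * M k j)"

definition stochastic :: "('b::finite \<Rightarrow> 'b \<Rightarrow> real) \<Rightarrow> bool" where
  "stochastic M \<longleftrightarrow> (\<forall>i j. M i j \<ge> 0) \<and> (\<forall>i. (\<Sum>j\<in>UNIV. M i j) = 1)"

definition irreducible_mat :: "('b::finite \<Rightarrow> 'b \<Rightarrow> real) \<Rightarrow> bool" where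
  "irreducible_mat M \<longleftrightarrow> (\<forall>i j. \<exists>n>0. mpow M n i j > 0)"

definition aperiodic_mat :: "('b::finite \<Rightarrow> 'b \<Rightarrow> real) \<Rightarrow> bool" where
  "aperiodic_mat M \<longleftrightarrow> (\<forall>i. Gcd {n::nat. n > 0 \<and> mpow M n i i > 0} = 1)"

definition invariant_prob :: "('b::finite \<Rightarrow> 'b \<Rightarrow> real) \<Rightarrow> ('b \<Rightarrow> real) \<Rightarrow> bool" where
  "invariant_prob M p \<longleftrightarrow> (\<forall>i. p i \<ge> 0) \<and> (\<Sum>i\<in>UNIV. p i) = 1 \<and>
     (\<forall>j. (\<Sum>i\<in>UNIV. p i * M i j) = p j)"

definition is_cycle :: "('b \<Rightarrow> 'b \<Rightarrow> real) \<Rightarrow> nat \<Rightarrow> (nat \<Rightarrow> 'b) \<Rightarrow> bool" where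
  "is_cycle M n x \<longleftrightarrow> n \<ge> 1 \<and> (\<forall>k<n. M (x k) (x ((k + 1) mod n)) > 0)"

definition cond_C1 :: "('b \<Rightarrow> 'b \<Rightarrow> real) \<Rightarrow> ('b \<Rightarrow> 'b \<Rightarrow> real) \<Rightarrow> ('b \<times> 'b \<Rightarrow> int) \<Rightarrow> bool" where
  "cond_C1 P Q f \<longleftrightarrow> (\<exists>n\<ge>1. \<exists>x y. is_cycle P n x \<and> is_cycle Q n y \<and>
      (\<Sum>k<n. f (x k, y k)) > 0)"

definition cond_C2 :: "('b \<Rightarrow> 'b \<Rightarrow> real) \<Rightarrow> ('b \<Rightarrow> 'b \<Rightarrow> real) \<Rightarrow> ('b \<times> 'b \<Rightarrow> int) \<Rightarrow> bool" where
  "cond_C2 P Q f \<longleftrightarrow> (\<forall>T::nat\<ge>1. \<exists>n\<ge>1. \<exists>x y. is_cycle P n x \<and> is_cycle Q n y \<and>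
      (\<Sum>k<n. f (x k, y k)) \<noteq> (\<Sum>k<n. f (x k, y ((k + T) mod n))))"

definition Phi :: "('b \<Rightarrow> 'b \<Rightarrow> real) \<Rightarrow> ('b \<Rightarrow> 'b \<Rightarrow> real) \<Rightarrow> ('b \<times> 'b \<Rightarrow> int) \<Rightarrow> real
    \<Rightarrow> 'b \<times> 'b \<Rightarrow> 'b \<times> 'b \<Rightarrow> real" where
  "Phi P Q f \<theta> = (\<lambda>(x, y) (x', y'). exp (\<theta> * real_of_int (f (x', y'))) * P x x' * Q y y')"

definition spectral_radius_mat :: "('b::finite \<Rightarrow> 'b \<Rightarrow> real) \<Rightarrow> real" where
  "spectral_radius_mat M = Max {cmod c | c. \<exists>v::'b \<Rightarrow> complex. v \<noteq> (\<lambda>_. 0) \<and>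
      (\<forall>i. (\<Sum>j\<in>UNIV. complex_of_real (M i j) * v j) = c * v i)}"

end

theory Submission
  imports Defs
begin


lemma exp_lin_le:
  fixes w G L :: real
  assumes "w > 0" "G > 0"
  shows "w * (L - ln G) \<ge> w - w * G * exp (- L)"
proof -
  have "ln (G * exp (- L)) \<le> G * exp (- L) - 1"
    using assms by (intro ln_le_minus_one) simp
  moreover have "ln (G * exp (- L)) = ln G - L" using assms by (simp add: ln_mult)
  ultimately have "L - ln G \<ge> 1 - G * exp (- L)" by simp
  from mult_left_mono[OF this less_imp_le[OF assms(1)]] show ?thesis
    by (simp add: algebra_simps)
qed

lemma exp_lin_le2:
  fixes v G L :: real
  assumes "v > 0" "G > 0"
  shows "v * (L - ln G) \<le> v * exp L / G - v"
    and "L \<noteq> ln G \<Longrightarrow> v * (L - ln G) < v * exp L / G - v"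
proof -
  have e: "ln (exp L / G) = L - ln G" using assms by (simp add: ln_div)
  have "ln (exp L / G) \<le> exp L / G - 1" using assms by (intro ln_le_minus_one) simp
  hence "L - ln G \<le> exp L / G - 1" using e by simp
  from mult_left_mono[OF this less_imp_le[OF assms(1)]] show "v * (L - ln G) \<le> v * exp L / G - v"
    by (simp add: algebra_simps)
  assume ne: "L \<noteq> ln G"
  have "exp L / G \<noteq> 1" using ne e by auto
  hence "ln (exp L / G) \<noteq> exp L / G - 1" using ln_eq_minus_one[of "exp L / G"] assms by auto
  hence "L - ln G < exp L / G - 1" using e \<open>L - ln G \<le> exp L / G - 1\<close> by simp
  from mult_strict_left_mono[OF this assms(1)] show "v * (L - ln G) < v * exp L / G - v"
    by (simp add: algebra_simps)
qed

lemma sum_rot: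
  fixes n :: nat
  assumes "n \<ge> 1"
  shows "(\<Sum>k<n. g ((k+1) mod n)) = (\<Sum>k<n. (g k :: real))"
proof -
  obtain m where n: "n = Suc m" using assms by (cases n) auto
  have "(\<Sum>k<Suc m. g ((k+1) mod Suc m)) = (\<Sum>k<m. g ((k+1) mod Suc m)) + g 0"
    by simp
  also have "(\<Sum>k<m. g ((k+1) mod Suc m)) = (\<Sum>k<m. g (Suc k))"
    by (intro sum.cong) auto
  also have "(\<Sum>k<m. g (Suc k)) + g 0 = (\<Sum>k<Suc m. g k)"
    by (metis add.commute sum.lessThan_Suc_shift)
  finally show ?thesis using n by simp
qed

lemma shift_cycle:
  assumes "is_cycle M n ys"
  shows "is_cycle M n (\<lambda>k. ys ((k+1) mod n))"
  using assms unfolding is_cycle_def by auto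

lemma sum4_strict:
  fixes f g :: "'a::finite \<Rightarrow> 'b::finite \<Rightarrow> 'c::finite \<Rightarrow> 'd::finite \<Rightarrow> real"
  assumes "\<And>a b c d. f a b c d \<le> g a b c d" "f a0 b0 c0 d0 < g a0 b0 c0 d0"
  shows "(\<Sum>a\<in>UNIV. \<Sum>b\<in>UNIV. \<Sum>c\<in>UNIV. \<Sum>d\<in>UNIV. f a b c d)
       < (\<Sum>a\<in>UNIV. \<Sum>b\<in>UNIV. \<Sum>c\<in>UNIV. \<Sum>d\<in>UNIV. g a b c d)"
proof -
  have l: "(\<Sum>d\<in>UNIV. f a b c d) \<le> (\<Sum>d\<in>UNIV. g a b c d)" for a b c
    by (intro sum_mono assms(1))
  have l2: "(\<Sum>c\<in>UNIV. \<Sum>d\<in>UNIV. f a b c d) \<le> (\<Sum>c\<in>UNIV. \<Sum>d\<in>UNIV. g a b c d)" for a b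
    by (intro sum_mono l)
  have l3: "(\<Sum>b\<in>UNIV. \<Sum>c\<in>UNIV. \<Sum>d\<in>UNIV. f a b c d) \<le> (\<Sum>b\<in>UNIV. \<Sum>c\<in>UNIV. \<Sum>d\<in>UNIV. g a b c d)" for a
    by (intro sum_mono l2)
  have s1: "(\<Sum>d\<in>UNIV. f a0 b0 c0 d) < (\<Sum>d\<in>UNIV. g a0 b0 c0 d)"
    using assms by (intro sum_strict_mono_ex1) auto
  have s2: "(\<Sum>c\<in>UNIV. \<Sum>d\<in>UNIV. f a0 b0 c d) < (\<Sum>c\<in>UNIV. \<Sum>d\<in>UNIV. g a0 b0 c d)"
    using l s1 by (intro sum_strict_mono_ex1) auto
  have s3: "(\<Sum>b\<in>UNIV. \<Sum>c\<in>UNIV. \<Sum>d\<in>UNIV. f a0 b c d) < (\<Sum>b\<in>UNIV. \<Sum>c\<in>UNIV. \<Sum>d\<in>UNIV. g a0 b c d)"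
    using l2 s2 by (intro sum_strict_mono_ex1) auto
  show ?thesis using l3 s3 by (intro sum_strict_mono_ex1) auto
qed

lemma irred_pos:
  fixes M :: "'b::finite \<Rightarrow> 'b \<Rightarrow> real"
  assumes "stochastic M" "irreducible_mat M"
    and cl: "\<And>i j. M i j > 0 \<Longrightarrow> g i > (0::real) \<Longrightarrow> g j > 0"
    and "g i0 > 0"
  shows "g j > 0"
proof -
  have "mpow M n i j \<noteq> 0 \<Longrightarrow> g i > 0 \<Longrightarrow> g j > 0" for n i j
  proof (induction n arbitrary: j)
    case 0 thus ?case by (simp split: if_splits)
  next
    case (Suc n)
    from Suc.prems(1) obtain k where k: "mpow M n i k * M k j \<noteq> 0"
      by (auto elim: sum.not_neutral_contains_not_neutral)
    hence "mpow M n i k \<noteq> 0" "M k j \<noteq> 0" by auto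
    moreover have "M k j \<ge> 0" using assms(1) unfolding stochastic_def by auto
    ultimately show ?case using Suc.IH Suc.prems cl by force
  qed
  moreover obtain n where "mpow M n i0 j > 0" using assms(2) unfolding irreducible_mat_def by blast
  ultimately show ?thesis using assms(4) by (metis less_irrefl)
qed

lemma sum_pos_ex:
  fixes g :: "'b::finite \<Rightarrow> real"
  assumes "sum g UNIV > 0" shows "\<exists>i. g i > 0"
proof (rule ccontr)
  assume "\<not> ?thesis" hence "sum g UNIV \<le> 0" by (intro sum_nonpos) (auto simp: not_less)
  thus False using assms by simp
qed



lemma swap23:
  "(\<Sum>a\<in>A. \<Sum>b\<in>B. \<Sum>c\<in>C. \<Sum>d\<in>D. g a b c d) = (\<Sum>a\<in>A. \<Sum>c\<in>C. \<Sum>b\<in>B. \<Sum>d\<in>D. g a b c d)"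
  by (rule sum.cong[OF refl], rule sum.swap)

lemma swap4:
  "(\<Sum>a\<in>A. \<Sum>b\<in>B. \<Sum>c\<in>C. \<Sum>d\<in>D. g a b c d) = (\<Sum>c\<in>C. \<Sum>d\<in>D. \<Sum>a\<in>A. \<Sum>b\<in>B. g a b c d)"
proof -
  have "(\<Sum>a\<in>A. \<Sum>b\<in>B. \<Sum>c\<in>C. \<Sum>d\<in>D. g a b c d) = (\<Sum>a\<in>A. \<Sum>c\<in>C. \<Sum>b\<in>B. \<Sum>d\<in>D. g a b c d)"
    by (rule swap23)
  also have "\<dots> = (\<Sum>c\<in>C. \<Sum>a\<in>A. \<Sum>b\<in>B. \<Sum>d\<in>D. g a b c d)" by (rule sum.swap)
  also have "\<dots> = (\<Sum>c\<in>C. \<Sum>a\<in>A. \<Sum>d\<in>D. \<Sum>b\<in>B. g a b c d)"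
    by (intro sum.cong refl sum.swap)
  also have "\<dots> = (\<Sum>c\<in>C. \<Sum>d\<in>D. \<Sum>a\<in>A. \<Sum>b\<in>B. g a b c d)"
    by (intro sum.cong refl sum.swap)
  finally show ?thesis .
qed



lemma core:
  fixes P :: "'a::finite \<Rightarrow> 'a \<Rightarrow> real" and Q :: "'b::finite \<Rightarrow> 'b \<Rightarrow> real"
    and F r pi :: "'a \<Rightarrow> 'b \<Rightarrow> real" and piQ :: "'b \<Rightarrow> real" and \<theta> :: real
  assumes sP: "stochastic P" and sQ: "stochastic Q"
    and iP: "irreducible_mat P" and iQ: "irreducible_mat Q"
    and ipQ: "invariant_prob Q piQ"
    and th: "\<theta> > 0" and rpos: "\<forall>x y. r x y > 0"
    and eig: "\<forall>x y. (\<Sum>x'\<in>UNIV. \<Sum>y'\<in>UNIV. exp (\<theta> * F x' y') * P x x' * Q y y' * r x' y') = r x y"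
    and stat: "\<forall>x' y'. (\<Sum>x\<in>UNIV. \<Sum>y\<in>UNIV. pi x y * (r x' y' / r x y * exp (\<theta> * F x' y') * P x x' * Q y y')) = pi x' y'"
    and pinn: "\<forall>x y. pi x y \<ge> 0" and pisum: "(\<Sum>x\<in>UNIV. \<Sum>y\<in>UNIV. pi x y) = 1"
    and cyc: "\<exists>n xs ys. is_cycle P n xs \<and> is_cycle Q n ys \<and>
       (\<Sum>k<n. F (xs k) (ys k)) \<noteq> (\<Sum>k<n. F (xs k) (ys ((k+1) mod n)))"
  shows "(\<Sum>x\<in>UNIV. \<Sum>y\<in>UNIV. (\<Sum>y'\<in>UNIV. pi x y') * piQ y * F x y) < (\<Sum>x\<in>UNIV. \<Sum>y\<in>UNIV. pi x y * F x y)"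
proof -
  define R where "R x y x' y' = r x' y' / r x y * exp (\<theta> * F x' y') * P x x' * Q y y'" for x y x' y'
  define w where "w x y x' y' = pi x y * R x y x' y'" for x y x' y'
  define p1 where "p1 x = (\<Sum>y\<in>UNIV. pi x y)" for x
  define \<kappa> where "\<kappa> x x' = (\<Sum>y\<in>UNIV. \<Sum>y'\<in>UNIV. w x y x' y')" for x x'
  define G where "G x x' = \<kappa> x x' / (p1 x * P x x')" for x x'
  define L where "L x y x' y' = \<theta> * F x' y' + ln (r x' y') - ln (r x y)" for x y x' y'
  define nu where "nu x y x' y' = \<kappa> x x' * piQ y * Q y y'" for x y x' y'
  have Pnn: "P x x' \<ge> 0" for x x' using sP unfolding stochastic_def by auto
  have Qnn: "Q y y' \<ge> 0" for y y' using sQ unfolding stochastic_def by auto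
  have Prow: "(\<Sum>x'\<in>UNIV. P x x') = 1" for x using sP unfolding stochastic_def by auto
  have Qrow: "(\<Sum>y'\<in>UNIV. Q y y') = 1" for y using sQ unfolding stochastic_def by auto
  have piQnn: "piQ y \<ge> 0" for y using ipQ unfolding invariant_prob_def by auto
  have piQsum: "(\<Sum>y\<in>UNIV. piQ y) = 1" using ipQ unfolding invariant_prob_def by auto
  have piQstat: "(\<Sum>y\<in>UNIV. piQ y * Q y y') = piQ y'" for y' using ipQ unfolding invariant_prob_def by auto
  have Rnn: "R x y x' y' \<ge> 0" for x y x' y'
    unfolding R_def using rpos Pnn Qnn by (intro mult_nonneg_nonneg) (auto intro: less_imp_le)
  have Rrow: "(\<Sum>x'\<in>UNIV. \<Sum>y'\<in>UNIV. R x y x' y') = 1" for x y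
  proof -
    have "(\<Sum>x'\<in>UNIV. \<Sum>y'\<in>UNIV. R x y x' y') = 
       (\<Sum>x'\<in>UNIV. \<Sum>y'\<in>UNIV. exp (\<theta> * F x' y') * P x x' * Q y y' * r x' y') / r x y"
      unfolding R_def sum_divide_distrib by (intro sum.cong refl) (simp add: field_simps)
    also have "\<dots> = 1" using eig rpos by (metis less_irrefl divide_self)
    finally show ?thesis .
  qed
  have Rexp: "R x y x' y' = exp (L x y x' y') * P x x' * Q y y'" for x y x' y'
  proof -
    have "exp (L x y x' y') = exp (\<theta> * F x' y') * r x' y' / r x y"
      unfolding L_def using rpos by (simp add: exp_add exp_diff)
    thus ?thesis unfolding R_def by simp
  qed
  have wnn: "w x y x' y' \<ge> 0" for x y x' y' unfolding w_def using pinn Rnn by simp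
  have wcol: "(\<Sum>x\<in>UNIV. \<Sum>y\<in>UNIV. w x y x' y') = pi x' y'" for x' y'
    using stat unfolding w_def R_def by simp
  have wrow: "(\<Sum>x'\<in>UNIV. \<Sum>y'\<in>UNIV. w x y x' y') = pi x y" for x y
    unfolding w_def by (simp add: sum_distrib_left[symmetric] Rrow)
  have p1sum: "(\<Sum>x\<in>UNIV. p1 x) = 1" unfolding p1_def using pisum .
  have knn: "\<kappa> x x' \<ge> 0" for x x' unfolding \<kappa>_def using wnn by (intro sum_nonneg) auto
  have krow: "(\<Sum>x'\<in>UNIV. \<kappa> x x') = p1 x" for x
  proof -
    have "(\<Sum>x'\<in>UNIV. \<kappa> x x') = (\<Sum>y\<in>UNIV. \<Sum>x'\<in>UNIV. \<Sum>y'\<in>UNIV. w x y x' y')"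
      unfolding \<kappa>_def by (rule sum.swap)
    thus ?thesis unfolding p1_def wrow by simp
  qed
  have kcol: "(\<Sum>x\<in>UNIV. \<kappa> x x') = p1 x'" for x'
  proof -
    have "(\<Sum>x\<in>UNIV. \<kappa> x x') = (\<Sum>y'\<in>UNIV. \<Sum>x\<in>UNIV. \<Sum>y\<in>UNIV. w x y x' y')"
    proof -
      have "(\<Sum>x\<in>UNIV. \<kappa> x x') = (\<Sum>x\<in>UNIV. \<Sum>y'\<in>UNIV. \<Sum>y\<in>UNIV. w x y x' y')"
        unfolding \<kappa>_def by (intro sum.cong refl sum.swap)
      also have "\<dots> = (\<Sum>y'\<in>UNIV. \<Sum>x\<in>UNIV. \<Sum>y\<in>UNIV. w x y x' y')" by (rule sum.swap)
      finally show ?thesis .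
    qed
    thus ?thesis unfolding p1_def wcol by simp
  qed
  have kpos: "\<kappa> x x' > 0" if hP: "P x x' > 0" and hp: "p1 x > 0" for x x'
  proof -
    obtain y where y: "pi x y > 0" using sum_pos_ex[of "pi x"] hp unfolding p1_def by auto
    obtain y' where y': "Q y y' > 0" using sum_pos_ex[of "Q y"] Qrow by auto
    have "w x y x' y' > 0" unfolding w_def R_def using y y' hP rpos by simp
    also have "w x y x' y' \<le> (\<Sum>y'\<in>UNIV. w x y x' y')" by (rule member_le_sum) (auto simp: wnn)
    also have "\<dots> \<le> \<kappa> x x'" unfolding \<kappa>_def
      by (rule member_le_sum[of _ _ "\<lambda>y. \<Sum>y'\<in>UNIV. w x y x' y'"]) (auto intro: sum_nonneg wnn)
    finally show ?thesis .
  qed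
  have p1pos: "p1 x > 0" for x
  proof -
    obtain x0 where "p1 x0 > 0" using sum_pos_ex[of p1] p1sum by auto
    moreover have "p1 j > 0" if "P i j > 0" "p1 i > 0" for i j
    proof -
      have "\<kappa> i j \<le> (\<Sum>x\<in>UNIV. \<kappa> x j)" by (rule member_le_sum) (auto simp: knn)
      thus ?thesis using kpos[OF that] kcol by simp
    qed
    ultimately show ?thesis using irred_pos[OF sP iP, of p1] by blast
  qed
  have p1nz: "p1 x \<noteq> 0" for x using p1pos[of x] by simp
  have piQpos: "piQ y > 0" for y
  proof -
    obtain y0 where "piQ y0 > 0" using sum_pos_ex[of piQ] piQsum by auto
    moreover have "piQ j > 0" if "Q i j > 0" "piQ i > 0" for i j
    proof -
      have "piQ i * Q i j \<le> (\<Sum>y\<in>UNIV. piQ y * Q y j)" by (rule member_le_sum) (auto simp: piQnn Qnn)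
      thus ?thesis using that piQstat[of j] by (smt (verit) mult_pos_pos)
    qed
    ultimately show ?thesis using irred_pos[OF sQ iQ, of piQ] by blast
  qed
  have kposP: "P x x' > 0" if "\<kappa> x x' > 0" for x x'
  proof (rule ccontr)
    assume "\<not> P x x' > 0" hence "P x x' = 0" using Pnn[of x x'] by simp
    hence "\<kappa> x x' = 0" unfolding \<kappa>_def w_def R_def by simp
    thus False using that by simp
  qed
  define S4 where "S4 g = (\<Sum>x\<in>UNIV. \<Sum>y\<in>UNIV. \<Sum>x'\<in>UNIV. \<Sum>y'\<in>UNIV. g x y x' y')"
    for g :: "'a \<Rightarrow> 'b \<Rightarrow> 'a \<Rightarrow> 'b \<Rightarrow> real"
  have S4_diff: "S4 (\<lambda>x y x' y'. f1 x y x' y' - f2 x y x' y') = S4 f1 - S4 f2" for f1 f2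
    unfolding S4_def by (simp add: sum_subtractf)
  have S4_add: "S4 (\<lambda>x y x' y'. f1 x y x' y' + f2 x y x' y') = S4 f1 + S4 f2" for f1 f2
    unfolding S4_def by (simp add: sum.distrib)
  have S4_mono: "S4 f1 \<le> S4 f2" if "\<And>x y x' y'. f1 x y x' y' \<le> f2 x y x' y'" for f1 f2
    unfolding S4_def by (intro sum_mono that)
  have S4_col: "S4 (\<lambda>x y x' y'. a x y x' y' * h x' y') = (\<Sum>x'\<in>UNIV. \<Sum>y'\<in>UNIV. (\<Sum>x\<in>UNIV. \<Sum>y\<in>UNIV. a x y x' y') * h x' y')" for a h
    unfolding S4_def by (subst swap4) (simp add: sum_distrib_right)
  have S4_row: "S4 (\<lambda>x y x' y'. a x y x' y' * h x y) = (\<Sum>x\<in>UNIV. \<Sum>y\<in>UNIV. (\<Sum>x'\<in>UNIV. \<Sum>y'\<in>UNIV. a x y x' y') * h x y)" for a h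
    unfolding S4_def by (simp add: sum_distrib_right)
  have S4_xx: "S4 (\<lambda>x y x' y'. b x y x' y' * h x x') = (\<Sum>x\<in>UNIV. \<Sum>x'\<in>UNIV. (\<Sum>y\<in>UNIV. \<Sum>y'\<in>UNIV. b x y x' y') * h x x')" for b h
    unfolding S4_def by (subst swap23) (simp add: sum_distrib_right)
  have SA: "S4 (\<lambda>x y x' y'. w x y x' y' * L x y x' y') = \<theta> * (\<Sum>x\<in>UNIV. \<Sum>y\<in>UNIV. pi x y * F x y)"
  proof -
    have "S4 (\<lambda>x y x' y'. w x y x' y' * L x y x' y') =
      \<theta> * S4 (\<lambda>x y x' y'. w x y x' y' * F x' y') + S4 (\<lambda>x y x' y'. w x y x' y' * ln (r x' y'))
      - S4 (\<lambda>x y x' y'. w x y x' y' * ln (r x y))"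
      unfolding S4_def L_def by (simp add: algebra_simps sum.distrib sum_subtractf sum_distrib_left)
    also have "S4 (\<lambda>x y x' y'. w x y x' y' * F x' y') = (\<Sum>x\<in>UNIV. \<Sum>y\<in>UNIV. pi x y * F x y)"
      by (simp add: S4_col wcol)
    also have "S4 (\<lambda>x y x' y'. w x y x' y' * ln (r x' y')) = S4 (\<lambda>x y x' y'. w x y x' y' * ln (r x y))"
      by (simp add: S4_col S4_row wcol wrow)
    finally show ?thesis by simp
  qed
  have SB: "S4 (\<lambda>x y x' y'. w x y x' y' * L x y x' y') \<ge> (\<Sum>x\<in>UNIV. \<Sum>x'\<in>UNIV. \<kappa> x x' * ln (G x x'))"
  proof -
    have e1: "(\<Sum>x\<in>UNIV. \<Sum>x'\<in>UNIV. \<kappa> x x' * ln (G x x')) = S4 (\<lambda>x y x' y'. w x y x' y' * ln (G x x'))"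
      by (simp add: S4_xx \<kappa>_def)
    have pt: "w x y x' y' * L x y x' y' - w x y x' y' * ln (G x x') \<ge> w x y x' y' - pi x y * Q y y' * \<kappa> x x' / p1 x"
      for x y x' y'
    proof (cases "w x y x' y' > 0")
      case True
      hence "pi x y > 0" "R x y x' y' > 0" using pinn Rnn unfolding w_def
        by (metis less_eq_real_def mult_zero_left mult_zero_right)+
      hence PQ: "P x x' > 0" "Q y y' > 0" using Pnn Qnn unfolding R_def
        by (metis less_eq_real_def mult_zero_left mult_zero_right)+
      have Gp: "G x x' > 0" unfolding G_def using kpos[OF PQ(1) p1pos] p1pos[of x] PQ by simp
      have "w x y x' y' * G x x' * exp (- L x y x' y') = pi x y * Q y y' * \<kappa> x x' / p1 x"
        unfolding w_def Rexp G_def using PQ p1pos[of x] by (simp add: exp_minus field_simps)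
      thus ?thesis using exp_lin_le[OF True Gp, of "L x y x' y'"] by (simp add: algebra_simps)
    next
      case False
      hence "w x y x' y' = 0" using wnn[of x y x' y'] by simp
      moreover have "pi x y * Q y y' * \<kappa> x x' / p1 x \<ge> 0"
        using pinn Qnn knn p1pos[of x] by simp
      ultimately show ?thesis by simp
    qed
    have "S4 w = 1" unfolding S4_def using wrow pisum by simp
    moreover have "S4 (\<lambda>x y x' y'. pi x y * Q y y' * \<kappa> x x' / p1 x) = 1"
    proof -
      have "S4 (\<lambda>x y x' y'. pi x y * Q y y' * \<kappa> x x' / p1 x) = S4 (\<lambda>x y x' y'. (pi x y * Q y y') * (\<kappa> x x' / p1 x))"
        by simp
      also have "\<dots> = (\<Sum>x\<in>UNIV. \<Sum>x'\<in>UNIV. (\<Sum>y\<in>UNIV. \<Sum>y'\<in>UNIV. pi x y * Q y y') * (\<kappa> x x' / p1 x))"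
        by (rule S4_xx)
      also have "\<dots> = (\<Sum>x\<in>UNIV. \<Sum>x'\<in>UNIV. \<kappa> x x')"
        using p1pos by (simp add: sum_distrib_left[symmetric] Qrow p1_def[symmetric] p1nz)
      also have "\<dots> = 1" using krow p1sum by simp
      finally show ?thesis .
    qed
    ultimately have "S4 (\<lambda>x y x' y'. w x y x' y' * L x y x' y' - w x y x' y' * ln (G x x')) \<ge> 0"
      using S4_mono[of "\<lambda>x y x' y'. w x y x' y' - pi x y * Q y y' * \<kappa> x x' / p1 x", OF pt]
      by (simp add: S4_diff)
    thus ?thesis using e1 by (simp add: S4_diff)
  qed
  have nunn: "nu x y x' y' \<ge> 0" for x y x' y' unfolding nu_def using knn piQnn Qnn by simp
  have nuCol: "(\<Sum>x\<in>UNIV. \<Sum>y\<in>UNIV. nu x y x' y') = p1 x' * piQ y'" for x' y'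
  proof -
    have "(\<Sum>x\<in>UNIV. \<Sum>y\<in>UNIV. nu x y x' y') = (\<Sum>x\<in>UNIV. \<kappa> x x' * (\<Sum>y\<in>UNIV. piQ y * Q y y'))"
      unfolding nu_def by (simp add: sum_distrib_left mult.assoc)
    also have "\<dots> = p1 x' * piQ y'" using piQstat kcol by (simp add: sum_distrib_right[symmetric])
    finally show ?thesis .
  qed
  have nuRow: "(\<Sum>x'\<in>UNIV. \<Sum>y'\<in>UNIV. nu x y x' y') = p1 x * piQ y" for x y
  proof -
    have "(\<Sum>x'\<in>UNIV. \<Sum>y'\<in>UNIV. nu x y x' y') = (\<Sum>x'\<in>UNIV. \<kappa> x x' * piQ y * (\<Sum>y'\<in>UNIV. Q y y'))"
      unfolding nu_def by (simp add: sum_distrib_left)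
    also have "\<dots> = p1 x * piQ y" using Qrow krow by (simp add: sum_distrib_right[symmetric])
    finally show ?thesis .
  qed
  have prod1: "(\<Sum>x\<in>UNIV. \<Sum>y\<in>UNIV. p1 x * piQ y) = 1"
    using p1sum piQsum by (simp add: sum_distrib_left[symmetric] sum_distrib_right[symmetric])
  have C1: "(\<Sum>x\<in>UNIV. \<Sum>x'\<in>UNIV. \<kappa> x x' * ln (G x x')) = S4 (\<lambda>x y x' y'. nu x y x' y' * ln (G x x'))"
  proof -
    have "(\<Sum>y\<in>UNIV. \<Sum>y'\<in>UNIV. nu x y x' y') = \<kappa> x x'" for x x'
      unfolding nu_def using piQsum Qrow by (simp add: sum_distrib_left[symmetric] mult.assoc)
    thus ?thesis by (simp add: S4_xx)
  qed
  have C2: "S4 (\<lambda>x y x' y'. nu x y x' y' * L x y x' y') = \<theta> * (\<Sum>x\<in>UNIV. \<Sum>y\<in>UNIV. p1 x * piQ y * F x y)"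
  proof -
    have "S4 (\<lambda>x y x' y'. nu x y x' y' * L x y x' y') =
      \<theta> * S4 (\<lambda>x y x' y'. nu x y x' y' * F x' y') + S4 (\<lambda>x y x' y'. nu x y x' y' * ln (r x' y'))
      - S4 (\<lambda>x y x' y'. nu x y x' y' * ln (r x y))"
      unfolding S4_def L_def by (simp add: algebra_simps sum.distrib sum_subtractf sum_distrib_left)
    also have "S4 (\<lambda>x y x' y'. nu x y x' y' * F x' y') = (\<Sum>x\<in>UNIV. \<Sum>y\<in>UNIV. p1 x * piQ y * F x y)"
      by (simp add: S4_col nuCol)
    also have "S4 (\<lambda>x y x' y'. nu x y x' y' * ln (r x' y')) = S4 (\<lambda>x y x' y'. nu x y x' y' * ln (r x y))"
      by (simp add: S4_col S4_row nuCol nuRow)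
    finally show ?thesis by simp
  qed
  have ptC: "nu x y x' y' * L x y x' y' - nu x y x' y' * ln (G x x') \<le> p1 x * piQ y * R x y x' y' - nu x y x' y'"
    and ptC': "L x y x' y' \<noteq> ln (G x x') \<Longrightarrow> nu x y x' y' > 0 \<Longrightarrow>
      nu x y x' y' * L x y x' y' - nu x y x' y' * ln (G x x') < p1 x * piQ y * R x y x' y' - nu x y x' y'"
    for x y x' y'
  proof -
    { assume np: "nu x y x' y' > 0"
      hence kp: "\<kappa> x x' > 0" and Qp: "Q y y' > 0" unfolding nu_def using knn[of x x'] piQnn[of y] Qnn[of y y']
        by (metis less_eq_real_def mult_zero_left mult_zero_right)+
      have Pp: "P x x' > 0" using kposP[OF kp] .
      have Gp: "G x x' > 0" unfolding G_def using kp Pp p1pos[of x] by simp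
      have eq: "nu x y x' y' * exp (L x y x' y') / G x x' = p1 x * piQ y * R x y x' y'"
        unfolding nu_def G_def Rexp using kp Pp p1pos[of x] by (simp add: field_simps)
      note exp_lin_le2[OF np Gp, of "L x y x' y'", unfolded eq] }
    note * = this
    show "nu x y x' y' * L x y x' y' - nu x y x' y' * ln (G x x') \<le> p1 x * piQ y * R x y x' y' - nu x y x' y'"
    proof (cases "nu x y x' y' > 0")
      case True thus ?thesis using *(1) by (simp add: algebra_simps)
    next
      case False
      hence "nu x y x' y' = 0" using nunn[of x y x' y'] by simp
      thus ?thesis using p1pos[of x] piQnn[of y] Rnn[of x y x' y'] by simp
    qed
    assume "L x y x' y' \<noteq> ln (G x x')" "nu x y x' y' > 0"
    thus "nu x y x' y' * L x y x' y' - nu x y x' y' * ln (G x x') < p1 x * piQ y * R x y x' y' - nu x y x' y'"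
      using *(2) by (simp add: algebra_simps)
  qed
  have ex: "\<exists>x y x' y'. L x y x' y' \<noteq> ln (G x x') \<and> nu x y x' y' > 0"
  proof (rule ccontr)
    assume neg: "\<not> ?thesis"
    have H: "L x y x' y' = ln (G x x')" if "P x x' > 0" "Q y y' > 0" for x y x' y'
    proof -
      have "\<kappa> x x' > 0" using kpos[OF that(1) p1pos] .
      hence "nu x y x' y' > 0" unfolding nu_def using piQpos[of y] that by simp
      thus ?thesis using neg by blast
    qed
    have cs: "\<theta> * (\<Sum>k<n. F (xs k) (ys k)) = (\<Sum>k<n. ln (G (xs k) (xs ((k+1) mod n))))"
      if cx: "is_cycle P n xs" and cy: "is_cycle Q n ys" for n xs ys
    proof -
      have n1: "n \<ge> 1" using cx unfolding is_cycle_def by simp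
      have "(\<Sum>k<n. ln (G (xs k) (xs ((k+1) mod n)))) =
          (\<Sum>k<n. L (xs k) (ys k) (xs ((k+1) mod n)) (ys ((k+1) mod n)))"
        using cx cy H unfolding is_cycle_def by (intro sum.cong refl) (simp)
      also have "\<dots> = \<theta> * (\<Sum>k<n. F (xs ((k+1) mod n)) (ys ((k+1) mod n)))
          + (\<Sum>k<n. ln (r (xs ((k+1) mod n)) (ys ((k+1) mod n)))) - (\<Sum>k<n. ln (r (xs k) (ys k)))"
        unfolding L_def by (simp add: sum.distrib sum_subtractf sum_distrib_left)
      also have "\<dots> = \<theta> * (\<Sum>k<n. F (xs k) (ys k))"
        using sum_rot[OF n1, of "\<lambda>k. F (xs k) (ys k)"] sum_rot[OF n1, of "\<lambda>k. ln (r (xs k) (ys k))"]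
        by simp
      finally show ?thesis by simp
    qed
    obtain n xs ys where c: "is_cycle P n xs" "is_cycle Q n ys"
      and ne: "(\<Sum>k<n. F (xs k) (ys k)) \<noteq> (\<Sum>k<n. F (xs k) (ys ((k+1) mod n)))"
      using cyc by blast
    have "\<theta> * (\<Sum>k<n. F (xs k) (ys k)) = \<theta> * (\<Sum>k<n. F (xs k) (ys ((k+1) mod n)))"
      using cs[OF c] cs[OF c(1) shift_cycle[OF c(2)]] by simp
    thus False using ne th by simp
  qed
  then obtain x0 y0 x0' y0' where w0: "L x0 y0 x0' y0' \<noteq> ln (G x0 x0')" "nu x0 y0 x0' y0' > 0" by blast
  have C3: "S4 (\<lambda>x y x' y'. nu x y x' y' * L x y x' y' - nu x y x' y' * ln (G x x'))
      < S4 (\<lambda>x y x' y'. p1 x * piQ y * R x y x' y' - nu x y x' y')"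
    unfolding S4_def
    by (rule sum4_strict[where f="\<lambda>x y x' y'. nu x y x' y' * L x y x' y' - nu x y x' y' * ln (G x x')"
        and g="\<lambda>x y x' y'. p1 x * piQ y * R x y x' y' - nu x y x' y'", OF ptC ptC'[OF w0]])
  have "S4 (\<lambda>x y x' y'. p1 x * piQ y * R x y x' y') = 1"
  proof -
    have "S4 (\<lambda>x y x' y'. p1 x * piQ y * R x y x' y') = S4 (\<lambda>x y x' y'. R x y x' y' * (p1 x * piQ y))"
      by (simp add: mult.commute)
    thus ?thesis by (simp add: S4_row Rrow prod1)
  qed
  moreover have "S4 nu = 1"
  proof -
    have "S4 nu = S4 (\<lambda>x y x' y'. nu x y x' y' * 1)" by simp
    thus ?thesis by (simp only: S4_row nuRow) (simp add: prod1)
  qed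
  ultimately have C3': "S4 (\<lambda>x y x' y'. nu x y x' y' * L x y x' y') < S4 (\<lambda>x y x' y'. nu x y x' y' * ln (G x x'))"
    using C3 by (simp add: S4_diff)
  have "\<theta> * (\<Sum>x\<in>UNIV. \<Sum>y\<in>UNIV. p1 x * piQ y * F x y) < \<theta> * (\<Sum>x\<in>UNIV. \<Sum>y\<in>UNIV. pi x y * F x y)"
    using C2 C3' C1 SB SA by linarith
  hence "(\<Sum>x\<in>UNIV. \<Sum>y\<in>UNIV. p1 x * piQ y * F x y) < (\<Sum>x\<in>UNIV. \<Sum>y\<in>UNIV. pi x y * F x y)"
    using th by simp
  thus ?thesis unfolding p1_def .
qed



theorem lemma5p8:
  fixes P Q :: "'a::finite \<Rightarrow> 'a \<Rightarrow> real"
    and piP piQ :: "'a \<Rightarrow> real"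
    and f :: "'a \<times> 'a \<Rightarrow> int"
    and \<theta>s :: real
    and rs :: "'a \<times> 'a \<Rightarrow> real"
    and pis :: "'a \<times> 'a \<Rightarrow> real"
  assumes "stochastic P" "irreducible_mat P" "aperiodic_mat P"
    and "stochastic Q" "irreducible_mat Q" "aperiodic_mat Q"
    and "invariant_prob P piP" "invariant_prob Q piQ"
    and "Gcd (range f) = 1"
    and mu_neg: "(\<Sum>z\<in>UNIV. piP (fst z) * piQ (snd z) * real_of_int (f z)) < 0"
    and "cond_C1 P Q f" "cond_C2 P Q f"
    and "\<theta>s > 0" "spectral_radius_mat (Phi P Q f \<theta>s) = 1"
    and "\<forall>z. rs z > 0"
    and "\<forall>z. (\<Sum>z'\<in>UNIV. Phi P Q f \<theta>s z z' * rs z') = rs z"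
    and "invariant_prob (\<lambda>z z'. rs z' / rs z * Phi P Q f \<theta>s z z') pis"
  shows "(\<Sum>z\<in>UNIV. (\<Sum>y\<in>UNIV. pis (fst z, y)) * piQ (snd z) * real_of_int (f z))
           < (\<Sum>z\<in>UNIV. pis z * real_of_int (f z))
         \<and> (\<Sum>z\<in>UNIV. piP (fst z) * (\<Sum>x\<in>UNIV. pis (x, snd z)) * real_of_int (f z))
           < (\<Sum>z\<in>UNIV. pis z * real_of_int (f z))"
  proof -
  have sum_pair: "(\<Sum>z\<in>UNIV. g z) = (\<Sum>x\<in>UNIV. \<Sum>y\<in>UNIV. g (x,y))" for g :: "'a \<times> 'a \<Rightarrow> real"
  proof -
    have "(\<Sum>x\<in>UNIV. \<Sum>y\<in>UNIV. g (x,y)) = (\<Sum>(x,y)\<in>UNIV\<times>UNIV. g (x,y))"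
      by (rule sum.cartesian_product)
    thus ?thesis by simp
  qed
  have eig1: "\<forall>x y. (\<Sum>x'\<in>UNIV. \<Sum>y'\<in>UNIV. exp (\<theta>s * real_of_int (f (x', y'))) * P x x' * Q y y' * rs (x', y')) = rs (x, y)"
  proof (intro allI)
    fix x y
    have "(\<Sum>z'\<in>UNIV. Phi P Q f \<theta>s (x,y) z' * rs z') = rs (x,y)" using assms(16) by blast
    thus "(\<Sum>x'\<in>UNIV. \<Sum>y'\<in>UNIV. exp (\<theta>s * real_of_int (f (x', y'))) * P x x' * Q y y' * rs (x', y')) = rs (x, y)"
      unfolding sum_pair by (simp add: Phi_def)
  qed
  have ip: "invariant_prob (\<lambda>z z'. rs z' / rs z * Phi P Q f \<theta>s z z') pis" by fact
  have stat1: "\<forall>x' y'. (\<Sum>x\<in>UNIV. \<Sum>y\<in>UNIV. pis (x, y) * (rs (x', y') / rs (x, y) * exp (\<theta>s * real_of_int (f (x', y'))) * P x x' * Q y y')) = pis (x', y')"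
  proof (intro allI)
    fix x' y'
    have "(\<Sum>z\<in>UNIV. pis z * (rs (x',y') / rs z * Phi P Q f \<theta>s z (x',y'))) = pis (x',y')"
      using ip unfolding invariant_prob_def by blast
    thus "(\<Sum>x\<in>UNIV. \<Sum>y\<in>UNIV. pis (x, y) * (rs (x', y') / rs (x, y) * exp (\<theta>s * real_of_int (f (x', y'))) * P x x' * Q y y')) = pis (x', y')"
      unfolding sum_pair by (simp add: Phi_def mult.assoc)
  qed
  have pinn: "\<forall>z. pis z \<ge> 0" using ip unfolding invariant_prob_def by blast
  have pisum1: "(\<Sum>x\<in>UNIV. \<Sum>y\<in>UNIV. pis (x, y)) = 1"
    using ip unfolding invariant_prob_def sum_pair by blast
  have C2': "\<forall>T::nat\<ge>1. \<exists>n\<ge>1. \<exists>x y. is_cycle P n x \<and> is_cycle Q n y \<and>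
      (\<Sum>k<n. f (x k, y k)) \<noteq> (\<Sum>k<n. f (x k, y ((k + T) mod n)))"
    using assms(12) unfolding cond_C2_def .
  have C21: "\<exists>n\<ge>1. \<exists>x y. is_cycle P n x \<and> is_cycle Q n y \<and>
      (\<Sum>k<n. f (x k, y k)) \<noteq> (\<Sum>k<n. f (x k, y ((k + 1) mod n)))"
    using C2' by (erule_tac x=1 in allE) simp
  then obtain n xs ys where c: "is_cycle P n xs" "is_cycle Q n ys"
      and nei: "(\<Sum>k<n. f (xs k, ys k)) \<noteq> (\<Sum>k<n. f (xs k, ys ((k+1) mod n)))"
    by blast
  have ne: "(\<Sum>k<n. real_of_int (f (xs k, ys k))) \<noteq> (\<Sum>k<n. real_of_int (f (xs k, ys ((k+1) mod n))))"
    using nei unfolding of_int_sum[symmetric] of_int_eq_iff .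
  have n1: "n \<ge> 1" using c unfolding is_cycle_def by simp
  have part1: "(\<Sum>x\<in>UNIV. \<Sum>y\<in>UNIV. (\<Sum>y'\<in>UNIV. pis (x, y')) * piQ y * real_of_int (f (x, y)))
      < (\<Sum>x\<in>UNIV. \<Sum>y\<in>UNIV. pis (x, y) * real_of_int (f (x, y)))"
  proof -
    have pn: "\<forall>x y. pis (x,y) \<ge> 0" using pinn by blast
    have rp: "\<forall>x y. rs (x,y) > 0" using assms(15) by blast
    have cy: "\<exists>n xs ys. is_cycle P n xs \<and> is_cycle Q n ys \<and>
       (\<Sum>k<n. real_of_int (f (xs k, ys k))) \<noteq> (\<Sum>k<n. real_of_int (f (xs k, ys ((k+1) mod n))))"
      using c ne by blast
    show ?thesis
      by (rule core[where P=P and Q=Q and piQ=piQ and \<theta>=\<theta>s and r="\<lambda>x y. rs (x,y)"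
       and F="\<lambda>x y. real_of_int (f (x,y))" and pi="\<lambda>x y. pis (x,y)",
       OF assms(1) assms(4) assms(2) assms(5) assms(8) assms(13) rp eig1 stat1 pn pisum1 cy])
  qed
  have eig2: "\<forall>a b. (\<Sum>a'\<in>UNIV. \<Sum>b'\<in>UNIV. exp (\<theta>s * real_of_int (f (b', a'))) * Q a a' * P b b' * rs (b', a')) = rs (b, a)"
  proof (intro allI)
    fix a b
    have "(\<Sum>a'\<in>UNIV. \<Sum>b'\<in>UNIV. exp (\<theta>s * real_of_int (f (b', a'))) * Q a a' * P b b' * rs (b', a'))
       = (\<Sum>b'\<in>UNIV. \<Sum>a'\<in>UNIV. exp (\<theta>s * real_of_int (f (b', a'))) * P b b' * Q a a' * rs (b', a'))"
      by (subst sum.swap) (simp add: ac_simps)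
    thus "(\<Sum>a'\<in>UNIV. \<Sum>b'\<in>UNIV. exp (\<theta>s * real_of_int (f (b', a'))) * Q a a' * P b b' * rs (b', a')) = rs (b, a)"
      using eig1 by simp
  qed
  have stat2: "\<forall>a' b'. (\<Sum>a\<in>UNIV. \<Sum>b\<in>UNIV. pis (b, a) * (rs (b', a') / rs (b, a) * exp (\<theta>s * real_of_int (f (b', a'))) * Q a a' * P b b')) = pis (b', a')"
  proof (intro allI)
    fix a' b'
    have "(\<Sum>a\<in>UNIV. \<Sum>b\<in>UNIV. pis (b, a) * (rs (b', a') / rs (b, a) * exp (\<theta>s * real_of_int (f (b', a'))) * Q a a' * P b b'))
      = (\<Sum>b\<in>UNIV. \<Sum>a\<in>UNIV. pis (b, a) * (rs (b', a') / rs (b, a) * exp (\<theta>s * real_of_int (f (b', a'))) * P b b' * Q a a'))"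
      by (subst sum.swap) (simp add: ac_simps)
    thus "(\<Sum>a\<in>UNIV. \<Sum>b\<in>UNIV. pis (b, a) * (rs (b', a') / rs (b, a) * exp (\<theta>s * real_of_int (f (b', a'))) * Q a a' * P b b')) = pis (b', a')"
      using stat1 by simp
  qed
  have pisum2: "(\<Sum>a\<in>UNIV. \<Sum>b\<in>UNIV. pis (b, a)) = 1"
    using pisum1 by (subst sum.swap) simp
  have ne2: "(\<Sum>k<n. real_of_int (f (xs k, ys ((k+1) mod n)))) \<noteq> (\<Sum>k<n. real_of_int (f (xs ((k+1) mod n), ys ((k+1) mod n))))"
    using ne sum_rot[OF n1, of "\<lambda>k. real_of_int (f (xs k, ys k))"] by simp
  have part2: "(\<Sum>a\<in>UNIV. \<Sum>b\<in>UNIV. (\<Sum>b'\<in>UNIV. pis (b', a)) * piP b * real_of_int (f (b, a)))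
      < (\<Sum>a\<in>UNIV. \<Sum>b\<in>UNIV. pis (b, a) * real_of_int (f (b, a)))"
  proof -
    have pn: "\<forall>a b. pis (b,a) \<ge> 0" using pinn by blast
    have rp: "\<forall>a b. rs (b,a) > 0" using assms(15) by blast
    have cy: "\<exists>n xs ys. is_cycle Q n xs \<and> is_cycle P n ys \<and>
       (\<Sum>k<n. real_of_int (f (ys k, xs k))) \<noteq> (\<Sum>k<n. real_of_int (f (ys ((k+1) mod n), xs k)))"
      using shift_cycle[OF c(2)] c(1) ne2 by blast
    show ?thesis
      by (rule core[where P=Q and Q=P and piQ=piP and \<theta>=\<theta>s and r="\<lambda>a b. rs (b,a)"
       and F="\<lambda>a b. real_of_int (f (b,a))" and pi="\<lambda>a b. pis (b,a)",
       OF assms(4) assms(1) assms(5) assms(2) assms(7) assms(13) rp eig2 stat2 pn pisum2 cy])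
  qed
  show ?thesis
  proof
    show "(\<Sum>z\<in>UNIV. (\<Sum>y\<in>UNIV. pis (fst z, y)) * piQ (snd z) * real_of_int (f z))
           < (\<Sum>z\<in>UNIV. pis z * real_of_int (f z))"
      using part1 unfolding sum_pair by simp
    have "(\<Sum>z\<in>UNIV. piP (fst z) * (\<Sum>x\<in>UNIV. pis (x, snd z)) * real_of_int (f z))
        = (\<Sum>a\<in>UNIV. \<Sum>b\<in>UNIV. (\<Sum>b'\<in>UNIV. pis (b', a)) * piP b * real_of_int (f (b, a)))"
      unfolding sum_pair by (subst sum.swap) (simp add: ac_simps)
    moreover have "(\<Sum>z\<in>UNIV. pis z * real_of_int (f z)) = (\<Sum>a\<in>UNIV. \<Sum>b\<in>UNIV. pis (b, a) * real_of_int (f (b, a)))"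
      unfolding sum_pair by (rule sum.swap)
    ultimately show "(\<Sum>z\<in>UNIV. piP (fst z) * (\<Sum>x\<in>UNIV. pis (x, snd z)) * real_of_int (f z))
           < (\<Sum>z\<in>UNIV. pis z * real_of_int (f z))" using part2 by simp
  qed
qed

end
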